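(* Let $\epsilon>0$ be any constant. Consider the family of all cost functions $C:2^N\to\mathbb{R}_{\ge0}$ on $N=\{1,\dots,n\}$ with $C(\emptyset)=0$ and $\max_S C(S)$ bounded by a polynomial in $n$. Over the Shapley distribution $\mathcal{D}^{sh}$, the Shapley value of this family is $(1-\epsilon)$-approximable from samples.
   Context: The Shapley value of $C$ is $\phi_i=\mathbb{E}_{\sigma}[C(S_{\sigma<i}\cup\{i\})-C(S_{\sigma<i})]$, where $\sigma$ is a uniformly random permutation of $N$ and $S_{\sigma<i}$ is the set of players preceding $i$ in $\sigma$. The Shapley distribution $\mathcal{D}^{sh}$ over $2^N$ first picks a size $j\in\{0,\dots,n\}$ uniformly at random and then a uniformly random subset of size $j$. An algorithm $\alpha$-approximates ($\alpha\in(0,1]$) the Shapley value of a family $\mathcal{C}$ over distribution $\mathcal{D}$ if for all $C\in\mathcal{C}$ and all $\delta>0$, given $\mathrm{poly}(n,1/\delta,1/(1-\alpha))$ i.i.d. samples $(S,C(S))$ with $S\sim\mathcal{D}$, it computes estimates $\tilde\phi\in\mathbb{R}^n$ such that, with probability at least $1-\delta$ over the samples and its choices, for all $i\in N$: if $\phi_i\ge 1/\mathrm{poly}(n)$ then $\alpha\phi_i\le\tilde\phi_i\le\phi_i/\alpha$; if $\phi_i\le-1/\mathrm{poly}(n)$ then $\phi_i/\alpha\le\tilde\phi_i\le\alpha\phi_i$; if $|\phi_i|<1/\mathrm{poly}(n)$ then $|\phi_i-\tilde\phi_i|=o(1)$. The family has Shapley value $\alpha$-approximable from samples over $\mathcal{D}$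 if such an algorithm exists. *)

theory Defs
  imports "HOL-Probability.Probability" "HOL-Combinatorics.Multiset_Permutations"
begin

text \<open>Players: N = {1..n}. Cost functions are modelled as maps nat set \<Rightarrow> real;
only their values on subsets of N are relevant.\<close>

definition players :: "nat \<Rightarrow> nat set" where
  "players n = {1..n}"

definition preceding :: "nat list \<Rightarrow> nat \<Rightarrow> nat set" where
  "preceding xs i = set (takeWhile (\<lambda>x. x \<noteq> i) xs)"

definition shapley :: "nat \<Rightarrow> (nat set \<Rightarrow> real) \<Rightarrow> nat \<Rightarrow> real" where
  "shapley n C i =
     measure_pmf.expectation (pmf_of_set (permutations_of_set (players n)))
       (\<lambda>xs. C (preceding xs i \<union> {i}) - C (preceding xs i))"

definition shapley_dist :: "nat \<Rightarrow> nat set pmf" where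
  "shapley_dist n =
     bind_pmf (pmf_of_set {0..n})
       (\<lambda>j. pmf_of_set {S. S \<subseteq> players n \<and> card S = j})"

definition bounded_costs :: "real \<Rightarrow> nat \<Rightarrow> nat \<Rightarrow> (nat set \<Rightarrow> real) set" where
  "bounded_costs c k n =
     {C. C {} = 0 \<and> (\<forall>S. S \<subseteq> players n \<longrightarrow> 0 \<le> C S \<and> C S \<le> c * real n ^ k)}"

definition samples :: "nat set pmf \<Rightarrow> nat \<Rightarrow> (nat set \<Rightarrow> real) \<Rightarrow> (nat \<Rightarrow> nat set \<times> real) pmf" where
  "samples D m C =
     map_pmf (\<lambda>f t. if t < m then (f t, C (f t)) else ({}, 0)) (Pi_pmf {..<m} {} (\<lambda>_. D))"

definition good_estimate :: "real \<Rightarrow> real \<Rightarrow> real \<Rightarrow> real \<Rightarrow> real \<Rightarrow> bool" where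
  "good_estimate \<alpha> t e phi phi' \<longleftrightarrow>
     (phi \<ge> t \<longrightarrow> \<alpha> * phi \<le> phi' \<and> phi' \<le> phi / \<alpha>) \<and>
     (phi \<le> - t \<longrightarrow> phi / \<alpha> \<le> phi' \<and> phi' \<le> \<alpha> * phi) \<and>
     (\<bar>phi\<bar> < t \<longrightarrow> \<bar>phi - phi'\<bar> \<le> e)"

text \<open>An algorithm gets n, delta and m(n,delta) samples, and outputs (randomly)
  an estimate vector. m is polynomial in n and 1/delta (alpha being fixed,
  the dependence on 1/(1-alpha) is absorbed into the constants), the
  threshold is 1/(a*n^b) and the additive error e(n) tends to 0.\<close>
definition shapley_approx_from_samples ::
  "real \<Rightarrow> (nat \<Rightarrow> (nat set \<Rightarrow> real) set) \<Rightarrow> (nat \<Rightarrow> nat set pmf) \<Rightarrow> bool" where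
  "shapley_approx_from_samples \<alpha> Fam D \<longleftrightarrow>
    (\<exists>(m :: nat \<Rightarrow> real \<Rightarrow> nat)
       (A :: nat \<Rightarrow> real \<Rightarrow> (nat \<Rightarrow> nat set \<times> real) \<Rightarrow> (nat \<Rightarrow> real) pmf)
       (cm :: real) (km :: nat) (a :: real) (b :: nat) (e :: nat \<Rightarrow> real).
       (\<forall>n \<delta>. \<delta> > 0 \<longrightarrow> real (m n \<delta>) \<le> cm * (real n + 1 / \<delta>) ^ km) \<and>
       a > 0 \<and> e \<longlonglongrightarrow> 0 \<and>
       (\<forall>n \<ge> 1. \<forall>C \<in> Fam n. \<forall>\<delta> > 0.
          measure_pmf.prob
            (bind_pmf (samples (D n) (m n \<delta>) C) (A n \<delta>))
            {est. \<forall>i \<in> players n.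
                    good_estimate \<alpha> (1 / (a * real n ^ b)) (e n) (shapley n C i) (est i)}
          \<ge> 1 - \<delta>))"

end

theory Submission imports Defs begin

lemma fiber_bij:
  assumes "finite N" "i \<in> N" "S \<subseteq> N - {i}"
  shows "bij_betw (\<lambda>(ys,zs). ys @ i # zs)
     (permutations_of_set S \<times> permutations_of_set (N - {i} - S))
     {xs \<in> permutations_of_set N. preceding xs i = S}"
proof (rule bij_betw_imageI)
  show "inj_on (\<lambda>(ys,zs). ys @ i # zs) (permutations_of_set S \<times> permutations_of_set (N - {i} - S))"
  proof (rule inj_onI, clarify)
    fix ys zs ys' zs'
    assume y: "ys \<in> permutations_of_set S" "ys' \<in> permutations_of_set S"
      and z: "zs \<in> permutations_of_set (N - {i} - S)"
      and e: "ys @ i # zs = ys' @ i # zs'"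
    have "i \<notin> set ys" "i \<notin> set zs" using y z assms by (auto simp: permutations_of_set_def)
    then show "ys = ys' \<and> zs = zs'" using e append_Cons_eq_iff by metis
  qed
  show "(\<lambda>(ys,zs). ys @ i # zs) ` (permutations_of_set S \<times> permutations_of_set (N - {i} - S)) =
     {xs \<in> permutations_of_set N. preceding xs i = S}"
  proof (rule equalityI)
    show "(\<lambda>(ys,zs). ys @ i # zs) ` (permutations_of_set S \<times> permutations_of_set (N - {i} - S)) \<subseteq>
     {xs \<in> permutations_of_set N. preceding xs i = S}"
    proof clarify
      fix ys zs assume y: "ys \<in> permutations_of_set S" and z: "zs \<in> permutations_of_set (N - {i} - S)"
      have iy: "i \<notin> set ys" using y assms by (auto simp: permutations_of_set_def)
      hence tw: "takeWhile (\<lambda>x. x \<noteq> i) (ys @ i # zs) = ys"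
        by (subst takeWhile_append2) auto
      have d: "distinct (ys @ i # zs)" "set (ys @ i # zs) = N"
        using y z assms iy by (auto simp: permutations_of_set_def)
      show "ys @ i # zs \<in> permutations_of_set N \<and> preceding (ys @ i # zs) i = S"
        using y d tw by (simp add: permutations_of_set_def preceding_def)
    qed
    show "{xs \<in> permutations_of_set N. preceding xs i = S} \<subseteq>
       (\<lambda>(ys,zs). ys @ i # zs) ` (permutations_of_set S \<times> permutations_of_set (N - {i} - S))"
    proof (rule subsetI)
      fix xs assume "xs \<in> {xs \<in> permutations_of_set N. preceding xs i = S}"
      then have xs: "xs \<in> permutations_of_set N" and p: "preceding xs i = S" by auto
      have ix: "i \<in> set xs" using xs assms by (auto simp: permutations_of_set_def)
      define ys where "ys = takeWhile (\<lambda>x. x \<noteq> i) xs"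
      have "dropWhile (\<lambda>x. x \<noteq> i) xs \<noteq> []" using ix by (simp add: dropWhile_eq_Nil_conv)
      then obtain y zs where dz: "dropWhile (\<lambda>x. x \<noteq> i) xs = y # zs" by (cases "dropWhile (\<lambda>x. x \<noteq> i) xs") auto
      then have xe: "xs = ys @ i # zs" unfolding ys_def by (auto simp: dropWhile_eq_Cons_conv)
      have sy: "set ys = S" using p by (simp add: preceding_def ys_def)
      have dx: "distinct xs" "set xs = N" using xs by (auto simp: permutations_of_set_def)
      have "ys \<in> permutations_of_set S" using dx sy xe by (simp add: permutations_of_set_def)
      moreover have "zs \<in> permutations_of_set (N - {i} - S)"
        using dx sy xe by (auto simp: permutations_of_set_def)
      ultimately show "xs \<in> (\<lambda>(ys,zs). ys @ i # zs) ` (permutations_of_set S \<times> permutations_of_set (N - {i} - S))"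
        using xe by (auto intro!: image_eqI[where x="(ys,zs)"])
    qed
  qed
qed

lemma fiber_card:
  assumes "finite N" "i \<in> N" "S \<subseteq> N - {i}"
  shows "card {xs \<in> permutations_of_set N. preceding xs i = S} = fact (card S) * fact (card N - 1 - card S)"
proof -
  have "card {xs \<in> permutations_of_set N. preceding xs i = S} =
     card (permutations_of_set S \<times> permutations_of_set (N - {i} - S))"
    using bij_betw_same_card[OF fiber_bij[OF assms]] by simp
  also have "\<dots> = fact (card S) * fact (card (N - {i} - S))"
    using assms by (simp add: card_cartesian_product finite_subset)
  also have "card (N - {i} - S) = card N - 1 - card S"
    using assms by (subst card_Diff_subset) (auto simp: finite_subset card_insert_if)
  finally show ?thesis .
qed

lemma shapley_sum:
  assumes i: "i \<in> players n"
  shows "shapley n C i = (\<Sum>S\<in>Pow (players n - {i}).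
            fact (card S) * fact (n - 1 - card S) / fact n * (C (S \<union> {i}) - C S))"
proof -
  let ?P = "permutations_of_set (players n)"
  let ?g = "\<lambda>S. C (S \<union> {i}) - C S"
  have fin: "finite (players n)" by (simp add: players_def)
  have cn: "card (players n) = n" by (simp add: players_def)
  have "shapley n C i = (\<Sum>xs\<in>?P. ?g (preceding xs i)) / card ?P"
    unfolding shapley_def using fin by (subst integral_pmf_of_set) auto
  also have "(\<Sum>xs\<in>?P. ?g (preceding xs i)) =
     (\<Sum>S\<in>Pow (players n - {i}). (\<Sum>xs\<in>{xs\<in>?P. preceding xs i = S}. ?g (preceding xs i)))"
  proof -
    have sub: "(\<lambda>xs. preceding xs i) ` ?P \<subseteq> Pow (players n - {i})"
    proof clarify
      fix xs x assume "xs \<in> ?P" "x \<in> preceding xs i"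
      then show "x \<in> players n - {i}"
        by (auto simp: preceding_def permutations_of_set_def dest: set_takeWhileD)
    qed
    show ?thesis
      by (rule sum.group[of ?P "Pow (players n - {i})" "\<lambda>xs. preceding xs i" "\<lambda>xs. ?g (preceding xs i)", symmetric])
         (use fin sub in simp_all)
  qed
  also have "\<dots> = (\<Sum>S\<in>Pow (players n - {i}). real (fact (card S) * fact (n - 1 - card S)) * ?g S)"
  proof (rule sum.cong[OF refl])
    fix S assume "S \<in> Pow (players n - {i})"
    then have "card {xs\<in>?P. preceding xs i = S} = fact (card S) * fact (n - 1 - card S)"
      using fiber_card[OF fin i] cn by auto
    then show "(\<Sum>xs\<in>{xs\<in>?P. preceding xs i = S}. ?g (preceding xs i)) =
       real (fact (card S) * fact (n - 1 - card S)) * ?g S" by simp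
  qed
  finally have "shapley n C i = (\<Sum>S\<in>Pow (players n - {i}). real (fact (card S) * fact (n - 1 - card S)) * ?g S) / real (card ?P)" .
  also have "real (card ?P) = fact n" using fin cn by simp
  finally have X: "shapley n C i = (\<Sum>S\<in>Pow (players n - {i}). real (fact (card S) * fact (n - 1 - card S)) * ?g S) / fact n" .
  show ?thesis unfolding X sum_divide_distrib
    by (intro sum.cong refl) (simp add: of_nat_fact)
qed


lemma dist_expect:
  fixes f :: "nat set \<Rightarrow> real"
  shows "measure_pmf.expectation (shapley_dist n) f =
     (\<Sum>T\<in>Pow (players n). f T / (real (n + 1) * real (n choose card T)))"
proof -
  let ?N = "players n"
  let ?U = "\<lambda>j. {S. S \<subseteq> ?N \<and> card S = j}"
  have fin: "finite ?N" by (simp add: players_def)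
  have cn: "card ?N = n" by (simp add: players_def)
  have finU: "finite (?U j)" for j by (rule finite_subset[of _ "Pow ?N"]) (use fin in auto)
  have neU: "?U j \<noteq> {}" if "j \<in> {0..n}" for j
  proof -
    from that cn obtain T where "T \<subseteq> ?N" "card T = j" by (metis atLeastAtMost_iff obtain_subset_with_card_n)
    then show ?thesis by auto
  qed
  have cU: "card (?U j) = n choose j" for j using n_subsets[OF fin, of j] cn by simp
  have "measure_pmf.expectation (shapley_dist n) f =
      (\<Sum>j\<in>{0..n}. measure_pmf.expectation (pmf_of_set (?U j)) f /\<^sub>R real (card {0..n}))"
    unfolding shapley_dist_def
    by (rule pmf_expectation_bind_pmf_of_set) (use finU neU in auto)
  also have "\<dots> = (\<Sum>j\<in>{0..n}. (\<Sum>T\<in>?U j. f T / (real (n + 1) * real (n choose card T))))"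
  proof (rule sum.cong[OF refl])
    fix j assume j: "j \<in> {0..n}"
    have "measure_pmf.expectation (pmf_of_set (?U j)) f = (\<Sum>T\<in>?U j. f T) / real (n choose j)"
      using finU neU[OF j] cU by (simp add: integral_pmf_of_set)
    then show "measure_pmf.expectation (pmf_of_set (?U j)) f /\<^sub>R real (card {0..n}) =
        (\<Sum>T\<in>?U j. f T / (real (n + 1) * real (n choose card T)))"
      by (simp add: sum_divide_distrib field_simps)
  qed
  also have "\<dots> = (\<Sum>T\<in>Pow ?N. f T / (real (n + 1) * real (n choose card T)))"
  proof -
    have "card ` Pow ?N \<subseteq> {0..n}"
      using cn fin by (auto dest: card_mono[OF fin])
    then have "(\<Sum>j\<in>{0..n}. \<Sum>T\<in>{T. T \<in> Pow ?N \<and> card T = j}. f T / (real (n + 1) * real (n choose card T)))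
        = (\<Sum>T\<in>Pow ?N. f T / (real (n + 1) * real (n choose card T)))"
      by (intro sum.group) (use fin in auto)
    moreover have "{T. T \<in> Pow ?N \<and> card T = j} = ?U j" for j by auto
    ultimately show ?thesis by simp
  qed
  finally show ?thesis .
qed

lemma t1: fixes a b F fs R :: real assumes "a > 0" "b > 0" "F > 0" "fs > 0" "R > 0"
  shows "a / b / (a * (F / (b * fs * R))) = fs * R / F"
  using assms by (simp add: field_simps)

lemma t2: fixes a b F fs R :: real assumes "a > 0" "b > 0" "F > 0" "fs > 0" "R > 0"
  shows "a / b / (a * (F / (fs * (b * R)))) = fs * R / F"
  using assms by (simp add: field_simps)

lemma coef1:
  assumes "s < n"
  shows "real (n + 1) / real (s + 1) / (real (n + 1) * real (n choose (s + 1))) =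
    fact s * fact (n - 1 - s) / fact n"
proof -
  obtain r where n: "n = s + 1 + r" using assms by (metis add_Suc_right less_iff_Suc_add add.commute Suc_eq_plus1)
  have b: "real (n choose (s+1)) = fact n / (real (s+1) * fact s * fact r)"
    using binomial_fact[of "s+1" n] n by (simp add: fact_Suc)
  have r: "n - 1 - s = r" using n by simp
  show ?thesis unfolding b r by (rule t1) auto
qed

lemma coef2:
  assumes "s < n"
  shows "real (n + 1) / real (n - s) / (real (n + 1) * real (n choose s)) =
    fact s * fact (n - 1 - s) / fact n"
proof -
  obtain r where n: "n = s + 1 + r" using assms by (metis add_Suc_right less_iff_Suc_add add.commute Suc_eq_plus1)
  have b: "real (n choose s) = fact n / (fact s * (real (n - s) * fact r))"
    using binomial_fact[of s n] n by (simp add: fact_Suc)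
  have r: "n - 1 - s = r" and p: "n - s > 0" using n by simp_all
  show ?thesis unfolding b r by (rule t2) (use p in auto)
qed


definition wt :: "nat \<Rightarrow> nat \<Rightarrow> nat set \<Rightarrow> real" where
  "wt n i T = (if i \<in> T then real (n + 1) / real (card T) else - (real (n + 1) / real (n - card T)))"

lemma key:
  assumes i: "i \<in> players n"
  shows "shapley n C i = measure_pmf.expectation (shapley_dist n) (\<lambda>T. C T * wt n i T)"
proof -
  let ?N = "players n"
  let ?N' = "players n - {i}"
  let ?h = "\<lambda>T. C T * wt n i T / (real (n + 1) * real (n choose card T))"
  let ?co = "\<lambda>S. fact (card S) * fact (n - 1 - card S) / fact n :: real"
  have fin: "finite ?N" by (simp add: players_def)
  have cn: "card ?N = n" by (simp add: players_def)
  have fin': "finite ?N'" using fin by simp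
  have cn': "card ?N' = n - 1" using cn i fin by simp
  have n1: "n \<ge> 1" using i by (simp add: players_def)
  have ins: "?N = insert i ?N'" using i by auto
  have cardS: "card S < n" if "S \<in> Pow ?N'" for S
  proof -
    have "card S \<le> card ?N'" using that fin' by (simp add: card_mono)
    then show ?thesis using cn' n1 by simp
  qed
  have "measure_pmf.expectation (shapley_dist n) (\<lambda>T. C T * wt n i T) = (\<Sum>T\<in>Pow ?N. ?h T)"
    by (rule dist_expect)
  also have "Pow ?N = Pow ?N' \<union> insert i ` Pow ?N'"
    by (subst ins) (rule Pow_insert)
  also have "(\<Sum>T\<in>Pow ?N' \<union> insert i ` Pow ?N'. ?h T) =
      (\<Sum>T\<in>Pow ?N'. ?h T) + (\<Sum>T\<in>insert i ` Pow ?N'. ?h T)"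
    by (rule sum.union_disjoint) (use fin' in auto)
  also have "(\<Sum>T\<in>insert i ` Pow ?N'. ?h T) = (\<Sum>S\<in>Pow ?N'. ?h (insert i S))"
  proof (rule sum.reindex_cong[of "insert i"])
    show "inj_on (insert i) (Pow ?N')"
      by (rule inj_onI) (metis Diff_insert_absorb PowD subset_Diff_insert)
  qed auto
  also have "(\<Sum>S\<in>Pow ?N'. ?h (insert i S)) = (\<Sum>S\<in>Pow ?N'. ?co S * C (S \<union> {i}))"
  proof (rule sum.cong[OF refl])
    fix S assume S: "S \<in> Pow ?N'"
    have fS: "finite S" using S fin' by (auto intro: finite_subset)
    have iS: "i \<notin> S" using S by auto
    have c: "card (insert i S) = card S + 1" using fS iS by simp
    have "?h (insert i S) = C (insert i S) * (real (n + 1) / real (card S + 1) /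
        (real (n + 1) * real (n choose (card S + 1))))"
      unfolding wt_def c by simp
    also have "\<dots> = ?co S * C (S \<union> {i})" using coef1[OF cardS[OF S]] by simp
    finally show "?h (insert i S) = ?co S * C (S \<union> {i})" .
  qed
  also have "(\<Sum>T\<in>Pow ?N'. ?h T) = (\<Sum>S\<in>Pow ?N'. - (?co S * C S))"
  proof (rule sum.cong[OF refl])
    fix S assume S: "S \<in> Pow ?N'"
    have iS: "i \<notin> S" using S by auto
    have "?h S = - (C S * (real (n + 1) / real (n - card S) /
        (real (n + 1) * real (n choose card S))))"
      unfolding wt_def using iS by simp
    also have "\<dots> = - (?co S * C S)" using coef2[OF cardS[OF S]] by simp
    finally show "?h S = - (?co S * C S)" .
  qed
  finally have "measure_pmf.expectation (shapley_dist n) (\<lambda>T. C T * wt n i T) =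
      (\<Sum>S\<in>Pow ?N'. - (?co S * C S)) + (\<Sum>S\<in>Pow ?N'. ?co S * C (S \<union> {i}))" .
  also have "\<dots> = (\<Sum>S\<in>Pow ?N'. ?co S * (C (S \<union> {i}) - C S))"
    unfolding sum.distrib[symmetric] by (intro sum.cong refl) (simp add: algebra_simps diff_divide_distrib)
  also have "\<dots> = shapley n C i" using shapley_sum[OF i] by simp
  finally show ?thesis by simp
qed



context
  fixes D :: "'a pmf" and h :: "'a \<Rightarrow> real" and B :: real and m :: nat and dflt :: 'a
  assumes finD: "finite (set_pmf D)"
    and bnd: "\<And>y. y \<in> set_pmf D \<Longrightarrow> \<bar>h y\<bar> \<le> B"
begin

definition "PP = Pi_pmf {..<m} dflt (\<lambda>_. D)"

lemma finPP: "finite (set_pmf PP)"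
proof -
  have "set_pmf PP = PiE_dflt {..<m} dflt (set_pmf \<circ> (\<lambda>_. D))"
    unfolding PP_def by (rule set_Pi_pmf) simp
  moreover have "finite (PiE_dflt {..<m} dflt (set_pmf \<circ> (\<lambda>_. D)))"
    using finD by (intro finite_PiE_dflt) auto
  ultimately show ?thesis by simp
qed

lemma intPP: "integrable (measure_pmf PP) f" for f :: "_ \<Rightarrow> real"
  by (rule integrable_measure_pmf_finite[OF finPP])

lemma intD: "integrable (measure_pmf D) f" for f :: "_ \<Rightarrow> real"
  by (rule integrable_measure_pmf_finite[OF finD])

lemma inset: "f \<in> set_pmf PP \<Longrightarrow> t < m \<Longrightarrow> f t \<in> set_pmf D"
  unfolding PP_def by (subst (asm) set_Pi_pmf) (auto simp: PiE_dflt_def)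

lemma comp_exp: "t < m \<Longrightarrow> measure_pmf.expectation PP (\<lambda>f. g (f t)) = measure_pmf.expectation D g"
  for g :: "_ \<Rightarrow> real"
proof -
  assume t: "t < m"
  have "map_pmf (\<lambda>f. f t) PP = D" unfolding PP_def using t by (subst Pi_pmf_component) auto
  then have "measure_pmf.expectation (map_pmf (\<lambda>f. f t) PP) g = measure_pmf.expectation D g" by simp
  then show ?thesis by simp
qed

lemma Bnn: "B \<ge> 0"
proof -
  obtain y where "y \<in> set_pmf D" using set_pmf_not_empty[of D] by blast
  then show ?thesis using bnd[of y] by simp
qed

lemma mubnd: "\<bar>measure_pmf.expectation D h\<bar> \<le> B"
proof -
  have "\<bar>measure_pmf.expectation D h\<bar> \<le> measure_pmf.expectation D (\<lambda>y. \<bar>h y\<bar>)"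
    by (rule integral_abs_bound)
  also have "\<dots> \<le> measure_pmf.expectation D (\<lambda>_. B)"
    by (rule integral_mono_AE) (auto intro: intD AE_pmfI bnd)
  finally show ?thesis by simp
qed

lemma cross:
  assumes s: "s < m" and t: "t < m" and st: "s \<noteq> t"
  shows "measure_pmf.expectation PP (\<lambda>f. h (f s) * h (f t)) = (measure_pmf.expectation D h)\<^sup>2"
proof -
  let ?mu = "measure_pmf.expectation D h"
  define ff where "ff = (\<lambda>x v. if x \<in> {s, t} then h v + B else 1)"
  have prodeq: "(\<Prod>x\<in>{..<m}. ff x (f x)) = (h (f s) + B) * (h (f t) + B)" for f
  proof -
    have "(\<Prod>x\<in>{..<m}. ff x (f x)) = (\<Prod>x\<in>{..<m} \<inter> {x. x \<in> {s,t}}. h (f x) + B) * (\<Prod>x\<in>{..<m} \<inter> - {x. x \<in> {s,t}}. 1)"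
      unfolding ff_def by (rule prod.If_cases) simp
    also have "{..<m} \<inter> {x. x \<in> {s,t}} = {s,t}" using s t by auto
    finally show ?thesis using st by simp
  qed
  have "measure_pmf.expectation PP (\<lambda>f. \<Prod>x\<in>{..<m}. ff x (f x)) = (\<Prod>x\<in>{..<m}. measure_pmf.expectation D (ff x))"
    unfolding PP_def
    by (rule expectation_prod_Pi_pmf) (use bnd in \<open>auto simp: ff_def intD abs_le_iff, fastforce+\<close>)
  also have "(\<Prod>x\<in>{..<m}. measure_pmf.expectation D (ff x)) =
      (\<Prod>x\<in>{..<m} \<inter> {x. x \<in> {s,t}}. measure_pmf.expectation D (\<lambda>v. h v + B)) * (\<Prod>x\<in>{..<m} \<inter> - {x. x \<in> {s,t}}. 1)"
    unfolding ff_def by (subst prod.If_cases[symmetric]) (auto intro!: prod.cong)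
  also have "{..<m} \<inter> {x. x \<in> {s,t}} = {s,t}" using s t by auto
  also have "measure_pmf.expectation D (\<lambda>v. h v + B) = ?mu + B"
    by (simp add: intD)
  finally have E1: "measure_pmf.expectation PP (\<lambda>f. (h (f s) + B) * (h (f t) + B)) = (?mu + B)^2"
    using st by (simp add: prodeq power2_eq_square)
  have "measure_pmf.expectation PP (\<lambda>f. (h (f s) + B) * (h (f t) + B)) =
      measure_pmf.expectation PP (\<lambda>f. h (f s) * h (f t)) + B * measure_pmf.expectation PP (\<lambda>f. h (f s))
       + B * measure_pmf.expectation PP (\<lambda>f. h (f t)) + B * B"
    by (simp add: algebra_simps intPP)
  also have "\<dots> = measure_pmf.expectation PP (\<lambda>f. h (f s) * h (f t)) + 2 * B * ?mu + B * B"
    using comp_exp[OF s] comp_exp[OF t] by simp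
  finally show ?thesis using E1 by (simp add: power2_eq_square algebra_simps)
qed


lemma second:
  "measure_pmf.expectation PP (\<lambda>f. (\<Sum>t<m. (h (f t) - measure_pmf.expectation D h))\<^sup>2) \<le> real m * (2*B)\<^sup>2"
proof -
  let ?mu = "measure_pmf.expectation D h"
  let ?W = "\<lambda>f t. h (f t) - ?mu"
  have eq: "(\<Sum>t<m. ?W f t)\<^sup>2 = (\<Sum>s<m. \<Sum>t<m. ?W f s * ?W f t)" for f
    by (simp add: power2_eq_square sum_product)
  have "measure_pmf.expectation PP (\<lambda>f. (\<Sum>t<m. ?W f t)\<^sup>2) =
      (\<Sum>s<m. \<Sum>t<m. measure_pmf.expectation PP (\<lambda>f. ?W f s * ?W f t))"
    unfolding eq by (simp add: Bochner_Integration.integral_sum intPP)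
  also have "\<dots> \<le> (\<Sum>s<m. (2*B)\<^sup>2)"
  proof (rule sum_mono)
    fix s assume s: "s \<in> {..<m}"
    have "(\<Sum>t<m. measure_pmf.expectation PP (\<lambda>f. ?W f s * ?W f t)) =
        (\<Sum>t<m. if t = s then measure_pmf.expectation PP (\<lambda>f. ?W f s * ?W f s) else 0)"
    proof (rule sum.cong[OF refl])
      fix t assume t: "t \<in> {..<m}"
      show "measure_pmf.expectation PP (\<lambda>f. ?W f s * ?W f t) =
          (if t = s then measure_pmf.expectation PP (\<lambda>f. ?W f s * ?W f s) else 0)"
      proof (cases "t = s")
        case False
        have "measure_pmf.expectation PP (\<lambda>f. ?W f s * ?W f t) =
           measure_pmf.expectation PP (\<lambda>f. h (f s) * h (f t)) - ?mu * measure_pmf.expectation PP (\<lambda>f. h (f t))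
           - ?mu * measure_pmf.expectation PP (\<lambda>f. h (f s)) + ?mu * ?mu"
          by (simp add: algebra_simps intPP)
        also have "\<dots> = 0" using cross[of s t] comp_exp[of s h] comp_exp[of t h] s t False
          by (simp add: power2_eq_square)
        finally show ?thesis using False by simp
      qed simp
    qed
    also have "\<dots> = measure_pmf.expectation PP (\<lambda>f. ?W f s * ?W f s)" using s by simp
    also have "\<dots> \<le> measure_pmf.expectation PP (\<lambda>f. (2*B)\<^sup>2)"
    proof (rule integral_mono_AE)
      show "AE f in measure_pmf PP. ?W f s * ?W f s \<le> (2*B)\<^sup>2"
      proof (rule AE_pmfI)
        fix f assume "f \<in> set_pmf PP"
        then have "f s \<in> set_pmf D" using inset s by auto
        then have "\<bar>?W f s\<bar> \<le> 2*B" using bnd mubnd by (smt (verit))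
        then have "\<bar>?W f s\<bar> * \<bar>?W f s\<bar> \<le> (2*B) * (2*B)" by (intro mult_mono) auto
        then show "?W f s * ?W f s \<le> (2*B)\<^sup>2" by (simp add: power2_eq_square abs_mult[symmetric])
      qed
    qed (auto intro: intPP)
    also have "\<dots> = (2*B)\<^sup>2" by simp
    finally show "(\<Sum>t<m. measure_pmf.expectation PP (\<lambda>f. ?W f s * ?W f t)) \<le> (2*B)\<^sup>2" .
  qed
  also have "\<dots> = real m * (2*B)\<^sup>2" by simp
  finally show ?thesis .
qed

lemma cheb:
  assumes m: "m > 0" and d: "d > 0"
  shows "measure_pmf.prob PP {f. d \<le> \<bar>(\<Sum>t<m. h (f t)) / real m - measure_pmf.expectation D h\<bar>}
     \<le> 4 * B\<^sup>2 / (real m * d\<^sup>2)"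
proof -
  let ?mu = "measure_pmf.expectation D h"
  let ?M = "\<lambda>f. (\<Sum>t<m. h (f t)) / real m"
  have EM: "measure_pmf.expectation PP ?M = ?mu"
  proof -
    have "measure_pmf.expectation PP (\<lambda>f. \<Sum>t<m. h (f t)) = (\<Sum>t<m. ?mu)"
      by (simp add: Bochner_Integration.integral_sum intPP comp_exp)
    then show ?thesis using m by simp
  qed
  have Mw: "?M f - ?mu = (\<Sum>t<m. (h (f t) - ?mu)) / real m" for f
    using m by (simp add: sum_subtractf field_simps)
  have "measure_pmf.prob PP {f \<in> space (measure_pmf PP). d \<le> \<bar>?M f - measure_pmf.expectation PP ?M\<bar>}
      \<le> measure_pmf.variance PP ?M / d\<^sup>2"
    by (rule measure_pmf.Chebyshev_inequality) (auto intro: intPP d)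
  also have "measure_pmf.variance PP ?M / d\<^sup>2 \<le> 4 * B\<^sup>2 / (real m * d\<^sup>2)"
  proof -
    have "measure_pmf.variance PP ?M =
        measure_pmf.expectation PP (\<lambda>f. (\<Sum>t<m. (h (f t) - ?mu))\<^sup>2) / (real m)\<^sup>2"
      unfolding EM Mw by (simp add: power_divide)
    also have "\<dots> \<le> real m * (2*B)\<^sup>2 / (real m)\<^sup>2"
      by (rule divide_right_mono[OF second]) simp
    also have "\<dots> = 4 * B\<^sup>2 / real m"
      using m by (simp add: power2_eq_square field_simps)
    finally have "measure_pmf.variance PP ?M \<le> 4 * B\<^sup>2 / real m" .
    then have "measure_pmf.variance PP ?M / d\<^sup>2 \<le> 4 * B\<^sup>2 / real m / d\<^sup>2"
      by (rule divide_right_mono) simp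
    then show ?thesis by simp
  qed
  finally show ?thesis using EM by simp
qed

end


lemma good_from_close:
  assumes e: "0 < \<epsilon>" "\<epsilon> < 1" and t: "t > 0" and ee: "e \<ge> \<epsilon> * t"
    and cl: "\<bar>x - phi\<bar> < \<epsilon> * t"
  shows "good_estimate (1 - \<epsilon>) t e phi x"
  unfolding good_estimate_def
proof (intro conjI impI)
  assume p: "phi \<ge> t"
  have "\<epsilon> * t \<le> \<epsilon> * phi" using p e by simp
  then show "(1 - \<epsilon>) * phi \<le> x" using cl by (simp add: algebra_simps abs_less_iff)
  have "x * (1 - \<epsilon>) \<le> phi" 
  proof -
    have "x \<le> phi + \<epsilon> * phi" using cl \<open>\<epsilon> * t \<le> \<epsilon> * phi\<close> by (simp add: abs_less_iff)
    then have "x * (1 - \<epsilon>) \<le> (phi + \<epsilon> * phi) * (1 - \<epsilon>)" using e by (intro mult_right_mono) auto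
    also have "\<dots> = phi - \<epsilon>*\<epsilon>*phi" by (simp add: algebra_simps)
    also have "\<dots> \<le> phi" using p t e by simp
    finally show ?thesis .
  qed
  then show "x \<le> phi / (1 - \<epsilon>)" using e by (simp add: field_simps)
next
  assume p: "phi \<le> - t"
  have "\<epsilon> * t \<le> \<epsilon> * (- phi)" using p e by (intro mult_left_mono) auto
  then show "x \<le> (1 - \<epsilon>) * phi" using cl by (simp add: algebra_simps abs_less_iff)
  have "phi \<le> x * (1 - \<epsilon>)"
  proof -
    have "phi + \<epsilon> * phi \<le> x" using cl \<open>\<epsilon> * t \<le> \<epsilon> * (- phi)\<close> by (simp add: abs_less_iff)
    then have "(phi + \<epsilon> * phi) * (1 - \<epsilon>) \<le> x * (1 - \<epsilon>)" using e by (intro mult_right_mono) auto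
    moreover have "(phi + \<epsilon> * phi) * (1 - \<epsilon>) = phi - \<epsilon>*\<epsilon>*phi" by (simp add: algebra_simps)
    moreover have "phi \<le> phi - \<epsilon>*\<epsilon>*phi" using p t e by (simp add: mult_nonneg_nonpos)
    ultimately show ?thesis by simp
  qed
  then show "phi / (1 - \<epsilon>) \<le> x" using e by (simp add: field_simps)
next
  assume "\<bar>phi\<bar> < t"
  show "\<bar>phi - x\<bar> \<le> e" using cl ee by simp
qed

lemma poly_bound:
  fixes K :: real and n :: nat and \<delta> :: real and p :: nat
  assumes K: "K > 0" and d: "\<delta> > 0"
  shows "real (nat \<lceil>K * real n ^ (p + 1) / \<delta>\<rceil>) \<le> (K + 1) * (real n + 1 / \<delta>) ^ (p + 2)"
proof (cases "n = 0")
  case True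
  then show ?thesis using K d by simp
next
  case False
  let ?x = "real n + 1 / \<delta>"
  have x1: "?x \<ge> 1" using False d by (simp add: add_increasing2)
  have nx: "real n \<le> ?x" using d by simp
  have dx: "1 / \<delta> \<le> ?x" by simp
  have y0: "K * real n ^ (p + 1) / \<delta> \<ge> 0" using K d by simp
  have a1: "real (nat \<lceil>K * real n ^ (p + 1) / \<delta>\<rceil>) \<le> K * real n ^ (p + 1) / \<delta> + 1"
    using y0 by linarith
  have a2: "K * real n ^ (p + 1) / \<delta> = K * (real n ^ (p + 1) * (1 / \<delta>))" by simp
  have a3: "K * (real n ^ (p + 1) * (1 / \<delta>)) \<le> K * (?x ^ (p + 1) * ?x)"
    using K d nx dx by (intro mult_left_mono mult_mono power_mono) auto
  have a4: "1 \<le> ?x ^ (p + 2)" using x1 by (rule one_le_power)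
  have a5: "?x ^ (p + 1) * ?x = ?x ^ (p + 2)" by simp
  have a6: "(K + 1) * ?x ^ (p + 2) = K * ?x ^ (p + 2) + ?x ^ (p + 2)" by (simp only: distrib_right mult_1)
  have a7: "K * (real n ^ (p + 1) * (1 / \<delta>)) \<le> K * ?x ^ (p + 2)" using a3 unfolding a5 .
  show ?thesis using a1 a2 a7 a4 a6 by linarith
qed



lemma set_dist: "set_pmf (shapley_dist n) \<subseteq> Pow (players n)"
proof
  fix T assume "T \<in> set_pmf (shapley_dist n)"
  then obtain j where j: "j \<in> {0..n}" and T: "T \<in> set_pmf (pmf_of_set {S. S \<subseteq> players n \<and> card S = j})"
    unfolding shapley_dist_def by auto
  have fin: "finite (players n)" by (simp add: players_def)
  have finU: "finite {S. S \<subseteq> players n \<and> card S = j}"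
    by (rule finite_subset[of _ "Pow (players n)"]) (use fin in auto)
  have "card (players n) = n" by (simp add: players_def)
  then obtain S where "S \<subseteq> players n" "card S = j" using j by (metis atLeastAtMost_iff obtain_subset_with_card_n)
  then have "{S. S \<subseteq> players n \<and> card S = j} \<noteq> {}" by auto
  then show "T \<in> Pow (players n)" using T finU by (subst (asm) set_pmf_of_set) auto
qed

lemma fin_dist: "finite (set_pmf (shapley_dist n))"
  by (rule finite_subset[OF set_dist]) (simp add: players_def)

lemma wt_bound:
  assumes i: "i \<in> players n" and T: "T \<subseteq> players n"
  shows "\<bar>wt n i T\<bar> \<le> real (n + 1)"
proof (cases "i \<in> T")
  case True
  have fT: "finite T" using T by (auto simp: players_def intro: finite_subset)
  then have "card T \<ge> 1" using True by (metis One_nat_def Suc_leI card_gt_0_iff empty_iff)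
  then have "real (n + 1) / real (card T) \<le> real (n + 1)"
    by (simp add: divide_le_eq mult_le_cancel_left1)
  then show ?thesis using True by (simp add: wt_def)
next
  case False
  have "T \<subseteq> players n - {i}" using T False by auto
  then have "card T \<le> card (players n - {i})" by (intro card_mono) (auto simp: players_def)
  also have "\<dots> = n - 1" using i by (simp add: players_def)
  finally have c0: "card T \<le> n - 1" .
  have c1: "1 \<le> n - card T" using c0 i by (simp add: players_def) arith
  have "real (n - card T) \<ge> 1" using c1 by (metis of_nat_1 of_nat_le_iff)
  then have "real (n + 1) / real (n - card T) \<le> real (n + 1)"
    by (simp add: divide_le_eq mult_le_cancel_left1)
  then show ?thesis using False by (simp add: wt_def)
qed


lemma main_prob:
  fixes \<epsilon> c :: real and k n :: nat and \<delta> :: real and C :: "nat set \<Rightarrow> real" and mm :: nat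
  assumes e: "0 < \<epsilon>" "\<epsilon> < 1" and n: "n \<ge> 1" and C: "C \<in> bounded_costs c k n" and d: "\<delta> > 0"
    and mm: "real mm \<ge> 16 * (c\<^sup>2 + 1) / \<epsilon>\<^sup>2 * real n ^ (2 * k + 5) / \<delta>"
  shows "measure_pmf.prob
            (bind_pmf (samples (shapley_dist n) mm C)
              (\<lambda>smp. return_pmf (\<lambda>i. (\<Sum>t<mm. snd (smp t) * wt n i (fst (smp t))) / real mm)))
            {est. \<forall>i \<in> players n.
                    good_estimate (1 - \<epsilon>) (1 / (1 * real n ^ 1)) (\<epsilon> / real n) (shapley n C i) (est i)}
          \<ge> 1 - \<delta>"
proof -
  let ?D = "shapley_dist n"
  let ?N = "players n"
  let ?P = "Pi_pmf {..<mm} {} (\<lambda>_. ?D)"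
  let ?G = "{est. \<forall>i \<in> players n.
                    good_estimate (1 - \<epsilon>) (1 / (1 * real n ^ 1)) (\<epsilon> / real n) (shapley n C i) (est i)}"
  define h where "h = (\<lambda>i T. C T * wt n i T)"
  define est where "est = (\<lambda>f i. (\<Sum>t<mm. h i (f t)) / real mm)"
  define B where "B = real (n + 1) * (\<bar>c\<bar> * real n ^ k)"
  define dd where "dd = \<epsilon> / real n"
  have npos: "real n > 0" using n by simp
  have dd: "dd > 0" using e npos by (simp add: dd_def)
  have mmpos: "mm > 0"
  proof -
    have "16 * (c\<^sup>2 + 1) / \<epsilon>\<^sup>2 * real n ^ (2 * k + 5) / \<delta> > 0"
      using e npos d by (intro divide_pos_pos mult_pos_pos) (auto simp: add_pos_nonneg add_nonneg_pos)
    then show ?thesis using mm by simp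
  qed
  have Cb: "\<And>S. S \<subseteq> ?N \<Longrightarrow> 0 \<le> C S \<and> C S \<le> c * real n ^ k"
    using C by (simp add: bounded_costs_def)
  have hb: "\<bar>h i y\<bar> \<le> B" if i: "i \<in> ?N" and y: "y \<in> set_pmf ?D" for i y
  proof -
    have yN: "y \<subseteq> ?N" using set_dist y by auto
    have "\<bar>C y\<bar> \<le> \<bar>c\<bar> * real n ^ k" using Cb[OF yN] by (smt (verit) mult_right_mono zero_le_power of_nat_0_le_iff)
    moreover have "\<bar>wt n i y\<bar> \<le> real (n + 1)" by (rule wt_bound[OF i yN])
    ultimately have "\<bar>C y\<bar> * \<bar>wt n i y\<bar> \<le> (\<bar>c\<bar> * real n ^ k) * real (n + 1)"
      by (intro mult_mono) auto
    then show ?thesis by (simp add: h_def B_def abs_mult mult.commute)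
  qed
  define bad where "bad = (\<lambda>i. {f. dd \<le> \<bar>(\<Sum>t<mm. h i (f t)) / real mm - measure_pmf.expectation ?D (h i)\<bar>})"
  have badb: "measure_pmf.prob ?P (bad i) \<le> 4 * B\<^sup>2 / (real mm * dd\<^sup>2)" if i: "i \<in> ?N" for i
    using cheb[where D="shapley_dist n" and h="h i" and B=B and m=mm and dflt="{}" and d=dd, OF fin_dist hb[OF i] mmpos dd] by (simp add: PP_def[where D="shapley_dist n" and h="h i" and B=B, OF fin_dist hb[OF i]] bad_def)
  have phi: "measure_pmf.expectation ?D (h i) = shapley n C i" if "i \<in> ?N" for i
    using key[OF that, of C] by (simp add: h_def)
  have eqpmf: "bind_pmf (samples ?D mm C)
        (\<lambda>smp. return_pmf (\<lambda>i. (\<Sum>t<mm. snd (smp t) * wt n i (fst (smp t))) / real mm)) = map_pmf est ?P"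
    unfolding samples_def bind_map_pmf map_pmf_def[of est]
    by (intro bind_pmf_cong refl arg_cong[where f=return_pmf] ext) (simp add: est_def h_def)
  have sub: "UNIV - (\<Union>i\<in>?N. bad i) \<subseteq> est -` ?G"
  proof
    fix f assume f: "f \<in> UNIV - (\<Union>i\<in>?N. bad i)"
    have "\<forall>i \<in> players n. good_estimate (1 - \<epsilon>) (1 / (1 * real n ^ 1)) (\<epsilon> / real n) (shapley n C i) (est f i)"
    proof (intro ballI)
      fix i assume i: "i \<in> ?N"
      have cl: "\<bar>est f i - shapley n C i\<bar> < \<epsilon> * (1 / (1 * real n ^ 1))"
        using f i phi[OF i] by (auto simp: bad_def est_def dd_def)
      show "good_estimate (1 - \<epsilon>) (1 / (1 * real n ^ 1)) (\<epsilon> / real n) (shapley n C i) (est f i)"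
        by (rule good_from_close[OF e _ _ cl]) (use npos in auto)
    qed
    then show "f \<in> est -` ?G" by simp
  qed
  have "1 - \<delta> \<le> 1 - (\<Sum>i\<in>?N. measure_pmf.prob ?P (bad i))"
  proof -
    have "(\<Sum>i\<in>?N. measure_pmf.prob ?P (bad i)) \<le> (\<Sum>i\<in>?N. 4 * B\<^sup>2 / (real mm * dd\<^sup>2))"
      by (rule sum_mono) (rule badb)
    also have "\<dots> = real n * (4 * B\<^sup>2 / (real mm * dd\<^sup>2))" by (simp add: players_def)
    also have "\<dots> \<le> \<delta>"
    proof -
      have B2: "B\<^sup>2 \<le> (2 * real n) ^ 2 * (c\<^sup>2 * real n ^ (2 * k))"
      proof -
        have "real (n + 1) \<le> 2 * real n" using n by simp
        then have "real (n + 1) ^ 2 \<le> (2 * real n) ^ 2" by (intro power_mono) auto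
        then have "real (n + 1) ^ 2 * (c\<^sup>2 * real n ^ (2 * k)) \<le> (2 * real n) ^ 2 * (c\<^sup>2 * real n ^ (2 * k))"
          by (intro mult_right_mono) auto
        moreover have "B\<^sup>2 = real (n + 1) ^ 2 * (c\<^sup>2 * real n ^ (2 * k))"
          by (simp add: B_def power_mult_distrib power_mult[symmetric] mult.commute)
        ultimately show ?thesis by linarith
      qed
      have "real n * (4 * B\<^sup>2 / (real mm * dd\<^sup>2)) = real n * real n ^ 2 * 4 * B\<^sup>2 / (real mm * \<epsilon>\<^sup>2)"
        using npos e by (simp add: dd_def power_divide field_simps)
      also have "\<dots> \<le> real n * real n ^ 2 * 4 * ((2 * real n) ^ 2 * (c\<^sup>2 * real n ^ (2 * k))) / (real mm * \<epsilon>\<^sup>2)"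
        using B2 npos mmpos e by (intro divide_right_mono mult_left_mono) auto
      also have "real n * real n ^ 2 * 4 * ((2 * real n) ^ 2 * (c\<^sup>2 * real n ^ (2 * k))) / (real mm * \<epsilon>\<^sup>2) = 16 * c\<^sup>2 * real n ^ (2 * k + 5) / (real mm * \<epsilon>\<^sup>2)"
        by (simp add: power_add power_mult_distrib power2_eq_square algebra_simps eval_nat_numeral)
      also have "\<dots> \<le> 16 * (c\<^sup>2 + 1) * real n ^ (2 * k + 5) / (real mm * \<epsilon>\<^sup>2)"
        using npos mmpos e by (intro divide_right_mono mult_right_mono) auto
      also have "\<dots> \<le> \<delta>"
      proof -
        define Q where "Q = 16 * (c\<^sup>2 + 1) / \<epsilon>\<^sup>2 * real n ^ (2 * k + 5)"
        have q1: "Q / \<delta> \<le> real mm" using mm by (simp add: Q_def)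
        have q2: "Q \<le> real mm * \<delta>" using q1 d by (simp add: pos_divide_le_eq)
        have q3: "16 * (c\<^sup>2 + 1) * real n ^ (2 * k + 5) / (real mm * \<epsilon>\<^sup>2) = Q / real mm"
          by (simp add: Q_def)
        have "Q / real mm \<le> \<delta>" using q2 mmpos by (simp add: pos_divide_le_eq mult.commute)
        then show ?thesis using q3 by simp
      qed
      finally show ?thesis .
    qed
    finally show ?thesis by simp
  qed
  also have "1 - (\<Sum>i\<in>?N. measure_pmf.prob ?P (bad i)) \<le> 1 - measure_pmf.prob ?P (\<Union>i\<in>?N. bad i)"
    using measure_pmf.finite_measure_subadditive_finite[of ?N bad ?P] by (simp add: players_def)
  also have "\<dots> = measure_pmf.prob ?P (UNIV - (\<Union>i\<in>?N. bad i))"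
    using measure_pmf.prob_compl[of "\<Union>i\<in>?N. bad i" ?P] by simp
  also have "\<dots> \<le> measure_pmf.prob ?P (est -` ?G)"
    by (rule measure_pmf.finite_measure_mono[OF sub]) simp
  also have "\<dots> = measure_pmf.prob (map_pmf est ?P) ?G" by simp
  finally show ?thesis unfolding eqpmf .
qed


theorem proposition1:
  fixes \<epsilon> c :: real and k :: nat
  assumes "0 < \<epsilon>" and "\<epsilon> < 1"
  shows "shapley_approx_from_samples (1 - \<epsilon>) (bounded_costs c k) shapley_dist"
proof -
  note e = assms
  define K where "K = 16 * (c\<^sup>2 + 1) / \<epsilon>\<^sup>2"
  define m where "m = (\<lambda>(n::nat) (\<delta>::real). nat \<lceil>K * real n ^ (2 * k + 4 + 1) / \<delta>\<rceil>)"
  define A where "A = (\<lambda>(n::nat) (\<delta>::real) (smp :: nat \<Rightarrow> nat set \<times> real).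
      return_pmf (\<lambda>i. (\<Sum>t<m n \<delta>. snd (smp t) * wt n i (fst (smp t))) / real (m n \<delta>)))"
  define ee where "ee = (\<lambda>n::nat. \<epsilon> / real n)"
  have K0: "K > 0" unfolding K_def using e by (intro divide_pos_pos mult_pos_pos) (auto simp: add_nonneg_pos)
  have mb: "\<forall>n \<delta>. \<delta> > 0 \<longrightarrow> real (m n \<delta>) \<le> (K + 1) * (real n + 1 / \<delta>) ^ (2 * k + 6)"
  proof (intro allI impI)
    fix n :: nat and \<delta> :: real assume d: "\<delta> > 0"
    have "real (m n \<delta>) \<le> (K + 1) * (real n + 1 / \<delta>) ^ (2 * k + 4 + 2)"
      unfolding m_def by (rule poly_bound[OF K0 d])
    then show "real (m n \<delta>) \<le> (K + 1) * (real n + 1 / \<delta>) ^ (2 * k + 6)" by (simp add: add.commute)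
  qed
  have el: "ee \<longlonglongrightarrow> 0" unfolding ee_def by (rule lim_const_over_n)
  have main: "\<forall>n \<ge> 1. \<forall>C \<in> bounded_costs c k n. \<forall>\<delta> > 0.
          measure_pmf.prob
            (bind_pmf (samples (shapley_dist n) (m n \<delta>) C) (A n \<delta>))
            {est. \<forall>i \<in> players n.
                    good_estimate (1 - \<epsilon>) (1 / (1 * real n ^ 1)) (ee n) (shapley n C i) (est i)}
          \<ge> 1 - \<delta>"
  proof (intro allI impI ballI)
    fix n :: nat and C \<delta> assume n: "n \<ge> 1" and C: "C \<in> bounded_costs c k n" and d: "(\<delta>::real) > 0"
    have mm: "real (m n \<delta>) \<ge> 16 * (c\<^sup>2 + 1) / \<epsilon>\<^sup>2 * real n ^ (2 * k + 5) / \<delta>"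
    proof -
      have p: "2 * k + 4 + 1 = 2 * k + 5" by simp
      show ?thesis unfolding m_def K_def p by (rule real_nat_ceiling_ge)
    qed
    show "measure_pmf.prob
            (bind_pmf (samples (shapley_dist n) (m n \<delta>) C) (A n \<delta>))
            {est. \<forall>i \<in> players n.
                    good_estimate (1 - \<epsilon>) (1 / (1 * real n ^ 1)) (ee n) (shapley n C i) (est i)}
          \<ge> 1 - \<delta>"
      unfolding A_def ee_def by (rule main_prob[OF e n C d mm])
  qed
  show ?thesis unfolding shapley_approx_from_samples_def
    apply (rule exI[of _ m], rule exI[of _ A], rule exI[of _ "K + 1"], rule exI[of _ "2 * k + 6"],
           rule exI[of _ 1], rule exI[of _ 1], rule exI[of _ ee])
    using mb el main by simp
qed

end
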